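(* Let $d\ge3$, $\chi^0=c_0(-\mu)^{1-d/2}$ with $c_0\neq0$, and let $\xi^a$ be a timelike vector field with $\nabla_aT_0^{ab}=0$, where $T_0^{ab}=4\chi^0_{\mu\mu}\xi^a\xi^b+2\chi^0_\mu g^{ab}$. Then (i) $\dot\mu/\mu=2D/d$ and $\dot\xi^b=(\dot\mu/\mu)\xi^b-\tfrac12\nabla^b\mu$; (ii) the entropy current $S_0^a:=\partial\chi^0/\partial\xi_a-\xi_bT_0^{ab}=-4\mu\chi^0_{\mu\mu}\xi^a$ satisfies $\nabla_aS_0^a=0$; (iii) if $\nabla_{(a}\xi_{b)}=t\,g_{ab}+s\,\xi_a\xi_b$ for some functions $t,s$, then $s=0$ and $t=D/d$, i.e. $\xi^a$ is a conformal Killing vector field.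
   Context: $\mu:=\xi^c\xi_c$, $D:=\nabla_c\xi^c$, $\dot\mu:=\xi^a\nabla_a\mu$, $\dot\xi^b:=\xi^a\nabla_a\xi^b$; subscripts $\mu$ denote derivatives with respect to $\mu$. *)

theory Defs
  imports "HOL-Analysis.Analysis"
begin

text \<open>Local-coordinate setting: an open coordinate patch U of R^d (d = CARD('n)),
  a metric g (components g_ab, as a matrix), its inverse g^ab, Levi-Civita connection.\<close>

definition pd :: "(real^'n \<Rightarrow> real) \<Rightarrow> 'n \<Rightarrow> real^'n \<Rightarrow> real" where
  "pd f c x = frechet_derivative f (at x) (axis c 1)"

coinductive smooth_on :: "(real^'n) set \<Rightarrow> (real^'n \<Rightarrow> real) \<Rightarrow> bool" where
  "\<lbrakk>\<forall>x\<in>U. f differentiable (at x); \<forall>c. smooth_on U (pd f c)\<rbrakk> \<Longrightarrow> smooth_on U f"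

definition lorentzian :: "real^'n^'n \<Rightarrow> bool" where
  "lorentzian M \<longleftrightarrow> transpose M = M \<and>
     (\<exists>(P::real^'n^'n) i0. invertible P \<and>
        transpose P ** M ** P = (\<chi> a b. if a = b then (if a = i0 then -1 else 1) else 0))"

definition ginv :: "(real^'n \<Rightarrow> real^'n^'n) \<Rightarrow> real^'n \<Rightarrow> real^'n^'n" where
  "ginv g x = matrix_inv (g x)"

definition christoffel :: "(real^'n \<Rightarrow> real^'n^'n) \<Rightarrow> real^'n \<Rightarrow> 'n \<Rightarrow> 'n \<Rightarrow> 'n \<Rightarrow> real" where
  "christoffel g x a b c = (1/2) * (\<Sum>e\<in>UNIV. ginv g x $ a $ e *
      (pd (\<lambda>y. g y $ e $ c) b x + pd (\<lambda>y. g y $ e $ b) c x - pd (\<lambda>y. g y $ b $ c) e x))"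

definition covd_vec :: "(real^'n \<Rightarrow> real^'n^'n) \<Rightarrow> (real^'n \<Rightarrow> real^'n) \<Rightarrow> real^'n \<Rightarrow> 'n \<Rightarrow> 'n \<Rightarrow> real" where
  "covd_vec g V x a b = pd (\<lambda>y. V y $ b) a x + (\<Sum>c\<in>UNIV. christoffel g x b a c * V x $ c)"

definition div_vec :: "(real^'n \<Rightarrow> real^'n^'n) \<Rightarrow> (real^'n \<Rightarrow> real^'n) \<Rightarrow> real^'n \<Rightarrow> real" where
  "div_vec g V x = (\<Sum>a\<in>UNIV. covd_vec g V x a a)"

definition div_tensor :: "(real^'n \<Rightarrow> real^'n^'n) \<Rightarrow> (real^'n \<Rightarrow> real^'n^'n) \<Rightarrow> real^'n \<Rightarrow> 'n \<Rightarrow> real" where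
  "div_tensor g T x b = (\<Sum>a\<in>UNIV. pd (\<lambda>y. T y $ a $ b) a x
      + (\<Sum>c\<in>UNIV. christoffel g x a a c * T x $ c $ b + christoffel g x b a c * T x $ a $ c))"

definition lower :: "(real^'n \<Rightarrow> real^'n^'n) \<Rightarrow> (real^'n \<Rightarrow> real^'n) \<Rightarrow> real^'n \<Rightarrow> real^'n" where
  "lower g V x = (\<chi> a. \<Sum>b\<in>UNIV. g x $ a $ b * V x $ b)"

definition mu :: "(real^'n \<Rightarrow> real^'n^'n) \<Rightarrow> (real^'n \<Rightarrow> real^'n) \<Rightarrow> real^'n \<Rightarrow> real" where
  "mu g xi x = (\<Sum>a\<in>UNIV. \<Sum>b\<in>UNIV. g x $ a $ b * xi x $ a * xi x $ b)"

definition dotd :: "(real^'n \<Rightarrow> real^'n) \<Rightarrow> (real^'n \<Rightarrow> real) \<Rightarrow> real^'n \<Rightarrow> real" where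
  "dotd xi f x = (\<Sum>a\<in>UNIV. xi x $ a * pd f a x)"

definition accel :: "(real^'n \<Rightarrow> real^'n^'n) \<Rightarrow> (real^'n \<Rightarrow> real^'n) \<Rightarrow> real^'n \<Rightarrow> 'n \<Rightarrow> real" where
  "accel g xi x b = (\<Sum>a\<in>UNIV. xi x $ a * covd_vec g xi x a b)"

definition grad_up :: "(real^'n \<Rightarrow> real^'n^'n) \<Rightarrow> (real^'n \<Rightarrow> real) \<Rightarrow> real^'n \<Rightarrow> 'n \<Rightarrow> real" where
  "grad_up g f x b = (\<Sum>a\<in>UNIV. ginv g x $ b $ a * pd f a x)"

definition chi0 :: "real \<Rightarrow> nat \<Rightarrow> real \<Rightarrow> real" where
  "chi0 c0 d m = c0 * (-m) powr (1 - real d / 2)"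

definition T0 :: "real \<Rightarrow> nat \<Rightarrow> (real^'n \<Rightarrow> real^'n^'n) \<Rightarrow> (real^'n \<Rightarrow> real^'n) \<Rightarrow> real^'n \<Rightarrow> real^'n^'n" where
  "T0 c0 d g xi x = (\<chi> a b.
      4 * deriv (deriv (chi0 c0 d)) (mu g xi x) * xi x $ a * xi x $ b
    + 2 * deriv (chi0 c0 d) (mu g xi x) * ginv g x $ a $ b)"

text \<open>S_0^a = d chi^0 / d xi_a - xi_b T_0^ab, where chi^0 is regarded as a function of the
  covector xi_a through mu = g^ab xi_a xi_b.\<close>
definition S0 :: "real \<Rightarrow> nat \<Rightarrow> (real^'n \<Rightarrow> real^'n^'n) \<Rightarrow> (real^'n \<Rightarrow> real^'n) \<Rightarrow> real^'n \<Rightarrow> real^'n" where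
  "S0 c0 d g xi x = (\<chi> a.
      frechet_derivative (\<lambda>\<eta>::real^'n. chi0 c0 d (\<Sum>p\<in>UNIV. \<Sum>q\<in>UNIV. ginv g x $ p $ q * \<eta> $ p * \<eta> $ q))
         (at (lower g xi x)) (axis a 1)
    - (\<Sum>b\<in>UNIV. lower g xi x $ b * T0 c0 d g xi x $ a $ b))"

definition symcov :: "(real^'n \<Rightarrow> real^'n^'n) \<Rightarrow> (real^'n \<Rightarrow> real^'n) \<Rightarrow> real^'n \<Rightarrow> 'n \<Rightarrow> 'n \<Rightarrow> real" where
  "symcov g xi x a b = (1/2) * ((\<Sum>c\<in>UNIV. g x $ b $ c * covd_vec g xi x a c)
                              + (\<Sum>c\<in>UNIV. g x $ a $ c * covd_vec g xi x b c))"

end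

theory Submission
  imports Defs
begin


lemma sum_delta_l: "(\<Sum>x\<in>UNIV. (if i = x then 1 else 0) * f x) = (f (i::'n::finite) :: real)"
proof -
  have "(\<Sum>x\<in>UNIV. (if i = x then 1 else 0) * f x) = (\<Sum>x\<in>UNIV. if i = x then f x else 0)"
    by (rule sum.cong) auto
  also have "\<dots> = f i" by simp
  finally show ?thesis .
qed
lemma sum_delta_r: "(\<Sum>x\<in>UNIV. f x * (if i = x then 1 else 0)) = (f (i::'n::finite) :: real)"
  using sum_delta_l[of i f] by (simp add: mult.commute)
lemma sum_delta_l': "(\<Sum>x\<in>UNIV. (if x = i then 1 else 0) * f x) = (f (i::'n::finite) :: real)"
  using sum_delta_l[of i f] by (simp add: eq_commute)
lemma sum_delta_r': "(\<Sum>x\<in>UNIV. f x * (if x = i then 1 else 0)) = (f (i::'n::finite) :: real)"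
  using sum_delta_r[of f i] by (simp add: eq_commute)

lemma sum_axis: "(\<Sum>c\<in>UNIV. axis a (1::real) $ c * F c) = F a"
  by (simp add: axis_def sum_delta_l')

lemma pd_of: "(f has_derivative D) (at x) \<Longrightarrow> pd f c x = D (axis c 1)"
  unfolding pd_def by (metis frechet_derivative_at)

lemma pd_has: "f differentiable (at x) \<Longrightarrow> (f has_derivative (\<lambda>h. \<Sum>c\<in>UNIV. h $ c * pd f c x)) (at x)"
proof -
  assume a: "f differentiable (at x)"
  let ?D = "frechet_derivative f (at x)"
  have h: "(f has_derivative ?D) (at x)" using a frechet_derivative_works by blast
  have lin: "linear ?D" using h has_derivative_linear by blast
  have "?D = (\<lambda>h. \<Sum>c\<in>UNIV. h $ c * pd f c x)"
  proof
    fix h :: "real^'a"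
    have "h = (\<Sum>c\<in>UNIV. h $ c *\<^sub>R axis c 1)"
      by (simp add: vec_eq_iff sum_component axis_def sum_delta_r)
    hence "?D h = ?D (\<Sum>c\<in>UNIV. h $ c *\<^sub>R axis c 1)" by simp
    also have "\<dots> = (\<Sum>c\<in>UNIV. h $ c * ?D (axis c 1))"
      using lin by (simp add: linear_sum linear_cmul)
    finally show "?D h = (\<Sum>c\<in>UNIV. h $ c * pd f c x)" by (simp add: pd_def)
  qed
  thus ?thesis using h by simp
qed

lemma pd_mult: "f differentiable (at x) \<Longrightarrow> h differentiable (at x) \<Longrightarrow>
   pd (\<lambda>y. f y * h y) c x = f x * pd h c x + pd f c x * h x"
  by (subst pd_of[OF has_derivative_mult[OF pd_has pd_has]]) (auto simp: sum_axis)

lemma pd_add: "f differentiable (at x) \<Longrightarrow> h differentiable (at x) \<Longrightarrow>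
   pd (\<lambda>y. f y + h y) c x = pd f c x + pd h c x"
  by (subst pd_of[OF has_derivative_add[OF pd_has pd_has]]) (auto simp: sum_axis)

lemma pd_diff: "f differentiable (at x) \<Longrightarrow> h differentiable (at x) \<Longrightarrow>
   pd (\<lambda>y. f y - h y) c x = pd f c x - pd h c x"
  by (subst pd_of[OF has_derivative_diff[OF pd_has pd_has]]) (auto simp: sum_axis)

lemma pd_minus: "f differentiable (at x) \<Longrightarrow>
   pd (\<lambda>y. - f y) c x = - pd f c x"
  by (subst pd_of[OF has_derivative_minus[OF pd_has]]) (auto simp: sum_axis)

lemma pd_const: "pd (\<lambda>y. k) c x = 0"
  by (subst pd_of[OF has_derivative_const]) auto

lemma pd_cmult: "f differentiable (at x) \<Longrightarrow> pd (\<lambda>y. k * f y) c x = k * pd f c x"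
  by (subst pd_of[OF has_derivative_mult[OF has_derivative_const pd_has]]) (auto simp: sum_axis)

lemma pd_sum: "\<forall>i\<in>S. f i differentiable (at x) \<Longrightarrow> finite S \<Longrightarrow>
   pd (\<lambda>y. \<Sum>i\<in>S. f i y) c x = (\<Sum>i\<in>S. pd (f i) c x)"
  by (subst pd_of[OF has_derivative_sum[OF pd_has]]) (auto simp: sum_axis)

lemma pd_comp: "(F has_real_derivative F') (at (f x)) \<Longrightarrow> f differentiable (at x) \<Longrightarrow>
   pd (\<lambda>y. F (f y)) c x = F' * pd f c x"
proof -
  assume a: "(F has_real_derivative F') (at (f x))" and b: "f differentiable (at x)"
  have "((\<lambda>y. F (f y)) has_derivative (\<lambda>h. F' * (\<Sum>c\<in>UNIV. h $ c * pd f c x))) (at x)"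
    using has_derivative_compose[OF pd_has[OF b] a[unfolded has_field_derivative_def]] by simp
  from pd_of[OF this, of c] show ?thesis by (simp add: sum_axis)
qed

lemma pd_local: "open U \<Longrightarrow> x \<in> U \<Longrightarrow> (\<And>y. y \<in> U \<Longrightarrow> f y = h y) \<Longrightarrow> h differentiable (at x)
   \<Longrightarrow> pd f c x = pd h c x"
proof -
  assume o: "open U" "x \<in> U" and e: "\<And>y. y \<in> U \<Longrightarrow> f y = h y" and d: "h differentiable (at x)"
  have "(f has_derivative (\<lambda>k. \<Sum>c\<in>UNIV. k $ c * pd h c x)) (at x)"
    by (rule has_derivative_transform_within_open[OF pd_has[OF d] o]) (simp add: e)
  from pd_of[OF this, of c] show ?thesis by (simp add: sum_axis)
qed

lemma diff_local: "open U \<Longrightarrow> x \<in> U \<Longrightarrow> (\<And>y. y \<in> U \<Longrightarrow> f y = h y) \<Longrightarrow> h differentiable (at x)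
   \<Longrightarrow> f differentiable (at x)"
proof -
  assume o: "open U" "x \<in> U" and e: "\<And>y. y \<in> U \<Longrightarrow> f y = h y" and d: "h differentiable (at x)"
  from d obtain D where D: "(h has_derivative D) (at x)" unfolding differentiable_def by blast
  have "(f has_derivative D) (at x)"
    by (rule has_derivative_transform_within_open[OF D o]) (simp add: e)
  thus ?thesis unfolding differentiable_def by blast
qed

lemma smooth_diff: "smooth_on U f \<Longrightarrow> x \<in> U \<Longrightarrow> f differentiable (at x)"
  by (erule smooth_on.cases) auto



lemma minv: "invertible (A::real^'n^'n) \<Longrightarrow> A ** matrix_inv A = mat 1 \<and> matrix_inv A ** A = mat 1"
  unfolding matrix_inv_def invertible_def by (rule someI_ex)

lemma minv_sym: assumes "invertible (A::real^'n^'n)" "transpose A = A"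
  shows "transpose (matrix_inv A) = matrix_inv A"
proof -
  let ?B = "matrix_inv A"
  have 1: "A ** ?B = mat 1" "?B ** A = mat 1" using minv[OF assms(1)] by auto
  have "transpose (?B ** A) = mat 1" using 1 by simp
  hence 2: "A ** transpose ?B = mat 1" using assms(2) by (simp add: matrix_transpose_mul)
  have "?B = ?B ** (A ** transpose ?B)" using 2 by simp
  also have "\<dots> = transpose ?B" using 1 by (simp add: matrix_mul_assoc)
  finally show ?thesis by simp
qed

lemma mult_entry: "(A::real^'n^'n) ** B = mat 1 \<Longrightarrow> (\<Sum>c\<in>UNIV. A$a$c * B$c$b) = (if a = b then 1 else 0)"
proof -
  assume "A ** B = mat 1"
  hence "(A ** B)$a$b = (mat 1 :: real^'n^'n)$a$b" by simp
  thus ?thesis by (simp add: matrix_matrix_mult_def mat_def)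
qed

lemma sym_entry: "transpose A = A \<Longrightarrow> A$a$b = A$b$a"
proof -
  assume "transpose A = A"
  hence "transpose A $ a $ b = A $ a $ b" by simp
  thus ?thesis by (simp add: transpose_def)
qed

lemma prod_nz: "(\<And>i. f i \<noteq> (0::real)) \<Longrightarrow> prod f (UNIV::'n::finite set) \<noteq> 0"
  by (simp add: prod_zero_iff)

lemma lor_inv: assumes "lorentzian (M::real^'n^'n)" shows "invertible M"
proof -
  obtain P :: "real^'n^'n" and i0 where P: "transpose P ** M ** P = (\<chi> a b. if a = b then (if a = i0 then -1 else 1) else 0)"
    using assms unfolding lorentzian_def by blast
  let ?D = "(\<chi> a b. if a = b then (if a = i0 then -1 else 1) else 0) :: real^'n^'n"
  have "det ?D = (\<Prod>i\<in>UNIV. ?D$i$i)" by (rule det_diagonal) simp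
  also have "\<dots> \<noteq> 0"
    by (rule prod_nz) simp
  finally have "det (transpose P ** M ** P) \<noteq> 0" using P by simp
  hence "det M \<noteq> 0" by (simp add: det_mul)
  thus ?thesis by (simp add: invertible_det_nz)
qed

lemma differentiable_prod': "finite I \<Longrightarrow> (\<And>i. i \<in> I \<Longrightarrow> f i differentiable (at x)) \<Longrightarrow>
  (\<lambda>y. \<Prod>i\<in>I. (f i y :: real)) differentiable (at x)"
proof -
  assume f: "finite I" and d: "\<And>i. i \<in> I \<Longrightarrow> f i differentiable (at x)"
  from d have "\<forall>i\<in>I. \<exists>D. (f i has_derivative D) (at x)" unfolding differentiable_def by blast
  from bchoice[OF this] obtain D where "\<forall>i\<in>I. (f i has_derivative D i) (at x)" by blast
  hence "((\<lambda>y. \<Prod>i\<in>I. (f i y :: real)) has_derivative (\<lambda>y. \<Sum>i\<in>I. D i y * (\<Prod>j\<in>I - {i}. f j x))) (at x)"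
    by (intro has_derivative_prod) auto
  thus ?thesis unfolding differentiable_def by blast
qed

lemma det_differentiable: "(\<And>i j. (\<lambda>y. M y $ i $ j) differentiable (at x)) \<Longrightarrow>
   (\<lambda>y. det (M y :: real^'n^'n)) differentiable (at x)"
  unfolding det_def
  by (intro differentiable_sum differentiable_mult differentiable_prod' ballI finite_permutations)
     auto

lemma minv_cramer: assumes "invertible (A::real^'n^'n)"
  shows "matrix_inv A $ k $ j = det (\<chi> i l. if l = k then axis j 1 $ i else A$i$l) / det A"
proof -
  let ?B = "matrix_inv A"
  have d: "det A \<noteq> 0" using assms invertible_det_nz by blast
  have "A *v (?B *v axis j 1) = axis j 1" using minv[OF assms] by (simp add: matrix_vector_mul_assoc)
  hence "?B *v axis j 1 = (\<chi> k. det(\<chi> i l. if l=k then axis j 1 $i else A$i$l) / det A)"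
    using cramer[OF d] by blast
  hence "(?B *v axis j 1) $ k = det (\<chi> i l. if l = k then axis j 1 $ i else A$i$l) / det A" by simp
  moreover have "(?B *v axis j 1) $ k = ?B $ k $ j"
    by (simp add: matrix_vector_mult_def axis_def sum_delta_r')
  ultimately show ?thesis by simp
qed

lemma minv_differentiable:
  assumes U: "open U" "x \<in> U" and inv: "\<And>y. y \<in> U \<Longrightarrow> invertible (M y :: real^'n^'n)"
    and dM: "\<And>i j. (\<lambda>y. M y $ i $ j) differentiable (at x)"
  shows "(\<lambda>y. matrix_inv (M y) $ k $ j) differentiable (at x)"
proof (rule diff_local[OF U])
  show "\<And>y. y \<in> U \<Longrightarrow> matrix_inv (M y) $ k $ j = det (\<chi> i l. if l = k then axis j 1 $ i else M y$i$l) / det (M y)"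
    using inv minv_cramer by blast
  have "det (M x) \<noteq> 0" using inv[OF U(2)] invertible_det_nz by blast
  moreover have "(\<lambda>y. det (\<chi> i l. if l = k then axis j 1 $ i else M y$i$l)) differentiable (at x)"
    by (rule det_differentiable) (rename_tac i' j', case_tac "j' = k", simp_all add: dM)
  moreover have "(\<lambda>y. det (M y)) differentiable (at x)" by (rule det_differentiable) (simp add: dM)
  ultimately show "(\<lambda>y. det (\<chi> i l. if l = k then axis j 1 $ i else M y$i$l) / det (M y)) differentiable (at x)"
    by simp
qed



lemma powr_deriv_neg: "m < 0 \<Longrightarrow> ((\<lambda>m::real. c * (-m) powr a) has_real_derivative (-(c*a)*(-m) powr (a-1))) (at m)"
proof -
  assume m: "m < 0"
  have "((\<lambda>m::real. (-m) powr a) has_real_derivative (a * (-m) powr (a - of_nat 1) * (-1))) (at m)"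
    by (rule DERIV_fun_powr) (auto intro!: derivative_eq_intros simp: m)
  from DERIV_cmult[OF this, of c] show ?thesis by (simp add: mult.assoc)
qed

definition "E1 c0 d m = c0*(real d/2-1)*(-m) powr (-(real d/2))"
definition "E2 c0 d m = c0*(real d/2-1)*(real d/2)*(-m) powr (-(real d/2)-1)"
definition "E3 c0 d m = c0*(real d/2-1)*(real d/2)*(real d/2+1)*(-m) powr (-(real d/2)-2)"

lemma chi_d1: "m < 0 \<Longrightarrow> (chi0 c0 d has_real_derivative E1 c0 d m) (at m)"
  unfolding chi0_def[abs_def] E1_def by (rule DERIV_cong[OF powr_deriv_neg[of m c0 "1 - real d/2"]]) (simp_all add: algebra_simps)

lemma chi_d2: "m < 0 \<Longrightarrow> (E1 c0 d has_real_derivative E2 c0 d m) (at m)"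
  unfolding E1_def[abs_def] E2_def by (rule DERIV_cong[OF powr_deriv_neg[of m "c0*(real d/2-1)" "-(real d/2)"]]) (simp_all add: algebra_simps)

lemma chi_d3: "m < 0 \<Longrightarrow> (E2 c0 d has_real_derivative E3 c0 d m) (at m)"
  unfolding E2_def[abs_def] E3_def by (rule DERIV_cong[OF powr_deriv_neg[of m "c0*(real d/2-1)*(real d/2)" "-(real d/2)-1"]]) (simp_all add: field_simps)

lemma F1_eq: "m < 0 \<Longrightarrow> deriv (chi0 c0 d) m = E1 c0 d m"
  using chi_d1 DERIV_imp_deriv by blast

lemma F1_d: "m < 0 \<Longrightarrow> (deriv (chi0 c0 d) has_real_derivative E2 c0 d m) (at m)"
  by (rule has_field_derivative_transform_within_open[OF chi_d2, of m "{m. m < 0}"])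
     (auto simp: open_Collect_less F1_eq)

lemma F2_eq: "m < 0 \<Longrightarrow> deriv (deriv (chi0 c0 d)) m = E2 c0 d m"
  using F1_d DERIV_imp_deriv by blast

lemma F2_d: "m < 0 \<Longrightarrow> (deriv (deriv (chi0 c0 d)) has_real_derivative E3 c0 d m) (at m)"
  by (rule has_field_derivative_transform_within_open[OF chi_d3, of m "{m. m < 0}"])
     (auto simp: open_Collect_less F2_eq)

lemma E2_nz: "m < 0 \<Longrightarrow> c0 \<noteq> 0 \<Longrightarrow> d \<ge> 3 \<Longrightarrow> E2 c0 d m \<noteq> 0"
  unfolding E2_def by simp

lemma E3_rel: "m < 0 \<Longrightarrow> m * E3 c0 d m = - (real d/2 + 1) * E2 c0 d m"
proof -
  assume m: "m < 0"
  have "(-m) powr (-(real d/2)-2) * (-m) = (-m) powr (-(real d/2)-2) * (-m) powr 1" using m by simp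
  also have "\<dots> = (-m) powr (-(real d/2)-2+1)" by (simp only: powr_add)
  also have "-(real d/2)-2+1 = -(real d/2)-1" by simp
  finally have "(-m) powr (-(real d/2)-1) = (-m) powr (-(real d/2)-2) * (-m)" by simp
  thus ?thesis unfolding E2_def E3_def by (simp add: field_simps)
qed



lemma sw: "(\<Sum>a\<in>UNIV. \<Sum>b\<in>UNIV. f a b) = (\<Sum>b\<in>UNIV. \<Sum>a\<in>UNIV. (f a b::real))"
  by (rule sum.swap)

lemma rot3: "(\<Sum>a\<in>UNIV. \<Sum>b\<in>UNIV. \<Sum>c\<in>UNIV. f a b c) = (\<Sum>b\<in>UNIV. \<Sum>c\<in>UNIV. \<Sum>a\<in>UNIV. (f a b c::real))"
proof -
  have "(\<Sum>a\<in>UNIV. \<Sum>b\<in>UNIV. \<Sum>c\<in>UNIV. f a b c) = (\<Sum>b\<in>UNIV. \<Sum>a\<in>UNIV. \<Sum>c\<in>UNIV. f a b c)"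
    by (rule sum.swap)
  also have "\<dots> = (\<Sum>b\<in>UNIV. \<Sum>c\<in>UNIV. \<Sum>a\<in>UNIV. f a b c)"
    by (rule sum.cong[OF refl], rule sum.swap)
  finally show ?thesis .
qed

lemma sw23: "(\<Sum>a\<in>UNIV. \<Sum>b\<in>UNIV. \<Sum>c\<in>UNIV. f a b c) = (\<Sum>a\<in>UNIV. \<Sum>c\<in>UNIV. \<Sum>b\<in>UNIV. (f a b c::real))"
  by (rule sum.cong[OF refl], rule sum.swap)

lemma perm13: "(\<Sum>a\<in>UNIV. \<Sum>b\<in>UNIV. \<Sum>c\<in>UNIV. f a b c) = (\<Sum>c\<in>UNIV. \<Sum>b\<in>UNIV. \<Sum>a\<in>UNIV. (f a b c::real))"
proof -
  have "(\<Sum>a\<in>UNIV. \<Sum>b\<in>UNIV. \<Sum>c\<in>UNIV. f a b c) = (\<Sum>b\<in>UNIV. \<Sum>c\<in>UNIV. \<Sum>a\<in>UNIV. f a b c)"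
    by (rule rot3)
  also have "\<dots> = (\<Sum>c\<in>UNIV. \<Sum>b\<in>UNIV. \<Sum>a\<in>UNIV. f a b c)" by (rule sum.swap)
  finally show ?thesis .
qed

lemma contract: "(\<Sum>b\<in>UNIV. A b * (\<Sum>e\<in>UNIV. B b e * T e)) = (\<Sum>e\<in>UNIV. (\<Sum>b\<in>UNIV. A b * B b e) * (T e::real))"
proof -
  have "(\<Sum>b\<in>UNIV. A b * (\<Sum>e\<in>UNIV. B b e * T e)) = (\<Sum>b\<in>UNIV. \<Sum>e\<in>UNIV. A b * (B b e * T e))"
    by (simp add: sum_distrib_left)
  also have "\<dots> = (\<Sum>e\<in>UNIV. \<Sum>b\<in>UNIV. A b * (B b e * T e))" by (rule sum.swap)
  also have "\<dots> = (\<Sum>e\<in>UNIV. (\<Sum>b\<in>UNIV. A b * B b e) * (T e::real))"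
    by (simp add: sum_distrib_right mult.assoc)
  finally show ?thesis .
qed

locale pt =
  fixes G H :: "'n::finite \<Rightarrow> 'n \<Rightarrow> real" and dG dH :: "'n \<Rightarrow> 'n \<Rightarrow> 'n \<Rightarrow> real"
    and X :: "'n \<Rightarrow> real" and dX :: "'n \<Rightarrow> 'n \<Rightarrow> real"
  assumes symG: "G a b = G b a" and symH: "H a b = H b a"
    and GH: "(\<Sum>c\<in>UNIV. G a c * H c b) = (if a = b then 1 else 0)"
    and symdG: "dG c a b = dG c b a"
    and dHf: "dH e a b = - (\<Sum>p\<in>UNIV. \<Sum>q\<in>UNIV. H a p * dG e p q * H q b)"
begin

lemma HG: "(\<Sum>c\<in>UNIV. H a c * G c b) = (if a = b then 1 else 0)"
  using GH[of b a] by (simp add: symG symH mult.commute eq_commute)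

definition "Gam a b c = 1/2 * (\<Sum>e\<in>UNIV. H a e * (dG b e c + dG c e b - dG e b c))"
definition "Cov a b = dX a b + (\<Sum>c\<in>UNIV. Gam b a c * X c)"
definition "Div = (\<Sum>a\<in>UNIV. Cov a a)"
definition "Mu = (\<Sum>a\<in>UNIV. \<Sum>b\<in>UNIV. G a b * X a * X b)"
definition "DMu c = (\<Sum>a\<in>UNIV. \<Sum>b\<in>UNIV. dG c a b * X a * X b + G a b * dX c a * X b + G a b * X a * dX c b)"
definition "L b = (\<Sum>c\<in>UNIV. G b c * X c)"

lemma L1: "(\<Sum>b\<in>UNIV. G c b * Gam b a d) = 1/2 * (dG a c d + dG d c a - dG c a d)"
proof -
  have "(\<Sum>b\<in>UNIV. G c b * Gam b a d) = 1/2 * (\<Sum>b\<in>UNIV. G c b * (\<Sum>e\<in>UNIV. H b e * (dG a e d + dG d e a - dG e a d)))"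
    by (simp add: Gam_def sum_distrib_left algebra_simps)
  also have "\<dots> = 1/2 * (\<Sum>e\<in>UNIV. (if c = e then 1 else 0) * (dG a e d + dG d e a - dG e a d))"
    by (simp only: contract GH)
  also have "\<dots> = 1/2 * (dG a c d + dG d c a - dG c a d)" by (simp only: sum_delta_l)
  finally show ?thesis .
qed

lemma DMu_alt: "DMu a = (\<Sum>d\<in>UNIV. \<Sum>c\<in>UNIV. X d * X c * dG a d c) + 2 * (\<Sum>b\<in>UNIV. L b * dX a b)"
proof -
  have 1: "(\<Sum>p\<in>UNIV. \<Sum>q\<in>UNIV. G p q * dX a p * X q) = (\<Sum>b\<in>UNIV. L b * dX a b)"
    by (simp add: L_def sum_distrib_right sum_distrib_left mult_ac)
  have 2: "(\<Sum>p\<in>UNIV. \<Sum>q\<in>UNIV. G p q * X p * dX a q) = (\<Sum>b\<in>UNIV. L b * dX a b)"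
  proof -
    have "(\<Sum>p\<in>UNIV. \<Sum>q\<in>UNIV. G p q * X p * dX a q) = (\<Sum>q\<in>UNIV. \<Sum>p\<in>UNIV. G p q * X p * dX a q)"
      by (rule sum.swap)
    thus ?thesis by (simp add: L_def sum_distrib_right sum_distrib_left mult_ac symG)
  qed
  show ?thesis unfolding DMu_def sum.distrib 1 2 by (simp add: algebra_simps)
qed

lemma L2: "(\<Sum>b\<in>UNIV. L b * Cov a b) = 1/2 * DMu a"
proof -
  have "(\<Sum>b\<in>UNIV. L b * (\<Sum>c\<in>UNIV. Gam b a c * X c))
      = (\<Sum>b\<in>UNIV. \<Sum>d\<in>UNIV. \<Sum>c\<in>UNIV. G b d * X d * (Gam b a c * X c))"
    unfolding L_def by (simp add: sum_product)
  also have "\<dots> = (\<Sum>d\<in>UNIV. \<Sum>c\<in>UNIV. \<Sum>b\<in>UNIV. G b d * X d * (Gam b a c * X c))"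
    by (rule rot3)
  also have "\<dots> = (\<Sum>d\<in>UNIV. \<Sum>c\<in>UNIV. X d * X c * (\<Sum>b\<in>UNIV. G d b * Gam b a c))"
    by (simp add: sum_distrib_left symG mult_ac)
  also have "\<dots> = 1/2 * ((\<Sum>d\<in>UNIV. \<Sum>c\<in>UNIV. X d * X c * dG a d c)
       + (\<Sum>d\<in>UNIV. \<Sum>c\<in>UNIV. X d * X c * dG c d a) - (\<Sum>d\<in>UNIV. \<Sum>c\<in>UNIV. X d * X c * dG d a c))"
    by (simp add: L1 sum_distrib_left algebra_simps sum_subtractf sum.distrib)
  also have "(\<Sum>d\<in>UNIV. \<Sum>c\<in>UNIV. X d * X c * dG c d a) = (\<Sum>d\<in>UNIV. \<Sum>c\<in>UNIV. X d * X c * dG d a c)"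
  proof -
    have "(\<Sum>d\<in>UNIV. \<Sum>c\<in>UNIV. X d * X c * dG c d a) = (\<Sum>c\<in>UNIV. \<Sum>d\<in>UNIV. X d * X c * dG c d a)"
      by (rule sum.swap)
    thus ?thesis by (simp add: symdG mult.commute)
  qed
  finally have "(\<Sum>b\<in>UNIV. L b * (\<Sum>c\<in>UNIV. Gam b a c * X c)) = 1/2 * (\<Sum>d\<in>UNIV. \<Sum>c\<in>UNIV. X d * X c * dG a d c)"
    by simp
  thus ?thesis unfolding Cov_def DMu_alt by (simp add: algebra_simps sum.distrib)
qed

lemma L3: "(\<Sum>a\<in>UNIV. dH a a b + (\<Sum>c\<in>UNIV. Gam a a c * H c b + Gam b a c * H a c)) = 0"
proof -
  define P1 where "P1 = (\<Sum>a\<in>UNIV. \<Sum>p\<in>UNIV. \<Sum>q\<in>UNIV. H a p * dG a p q * H q b)"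
  define A where "A = (\<Sum>a\<in>UNIV. \<Sum>c\<in>UNIV. \<Sum>e\<in>UNIV. H a e * dG a e c * H c b)"
  define B where "B = (\<Sum>a\<in>UNIV. \<Sum>c\<in>UNIV. \<Sum>e\<in>UNIV. H a e * dG c e a * H c b)"
  define C where "C = (\<Sum>a\<in>UNIV. \<Sum>c\<in>UNIV. \<Sum>e\<in>UNIV. H a e * dG e a c * H c b)"
  define A' where "A' = (\<Sum>a\<in>UNIV. \<Sum>c\<in>UNIV. \<Sum>e\<in>UNIV. H b e * dG a e c * H a c)"
  define B' where "B' = (\<Sum>a\<in>UNIV. \<Sum>c\<in>UNIV. \<Sum>e\<in>UNIV. H b e * dG c e a * H a c)"
  define C' where "C' = (\<Sum>a\<in>UNIV. \<Sum>c\<in>UNIV. \<Sum>e\<in>UNIV. H b e * dG e a c * H a c)"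
  have T1: "(\<Sum>a\<in>UNIV. dH a a b) = - P1" unfolding P1_def dHf by (simp add: sum_negf)
  have T2: "(\<Sum>a\<in>UNIV. \<Sum>c\<in>UNIV. Gam a a c * H c b) = 1/2 * (A + B - C)"
    unfolding A_def B_def C_def Gam_def
    by (simp add: sum_distrib_left sum_distrib_right sum.distrib sum_subtractf algebra_simps)
  have T3: "(\<Sum>a\<in>UNIV. \<Sum>c\<in>UNIV. Gam b a c * H a c) = 1/2 * (A' + B' - C')"
    unfolding A'_def B'_def C'_def Gam_def
    by (simp add: sum_distrib_left sum_distrib_right sum.distrib sum_subtractf algebra_simps)
  have AC: "A = C"
  proof -
    have "C = (\<Sum>e\<in>UNIV. \<Sum>c\<in>UNIV. \<Sum>a\<in>UNIV. H a e * dG e a c * H c b)"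
      unfolding C_def by (rule perm13)
    thus ?thesis unfolding A_def by (simp add: symH)
  qed
  have AB': "A' = B'"
  proof -
    have "B' = (\<Sum>c\<in>UNIV. \<Sum>a\<in>UNIV. \<Sum>e\<in>UNIV. H b e * dG c e a * H a c)"
      unfolding B'_def by (rule sum.swap)
    thus ?thesis unfolding A'_def by (simp add: symH)
  qed
  have PA: "P1 = A'"
    unfolding P1_def A'_def by (rule sum.cong[OF refl], rule sum.cong[OF refl], rule sum.cong[OF refl])
      (simp add: symH symdG[of _ _ a for a] mult_ac)
  have BC: "C' = B"
  proof -
    have "C' = (\<Sum>a\<in>UNIV. \<Sum>e\<in>UNIV. \<Sum>c\<in>UNIV. H b e * dG e a c * H a c)"
      unfolding C'_def by (rule sw23)
    thus ?thesis unfolding B_def by (simp, intro sum.cong refl, subst symdG, simp add: symH)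
  qed
  have "(\<Sum>a\<in>UNIV. dH a a b + (\<Sum>c\<in>UNIV. Gam a a c * H c b + Gam b a c * H a c))
     = (\<Sum>a\<in>UNIV. dH a a b) + (\<Sum>a\<in>UNIV. \<Sum>c\<in>UNIV. Gam a a c * H c b) + (\<Sum>a\<in>UNIV. \<Sum>c\<in>UNIV. Gam b a c * H a c)"
    by (simp add: sum.distrib)
  also have "\<dots> = 0" unfolding T1 T2 T3 using AC AB' PA BC by (simp add: field_simps)
  finally show ?thesis .
qed

lemma LX: "(\<Sum>b\<in>UNIV. L b * X b) = Mu"
  unfolding L_def Mu_def by (simp add: sum_distrib_right sum_distrib_left mult_ac)

lemma HL: "(\<Sum>q\<in>UNIV. H a q * L q) = X a"
proof -
  have "(\<Sum>q\<in>UNIV. H a q * L q) = (\<Sum>c\<in>UNIV. (\<Sum>q\<in>UNIV. H a q * G q c) * X c)"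
    unfolding L_def by (rule contract)
  also have "\<dots> = X a" by (simp add: HG sum_delta_l)
  finally show ?thesis .
qed

lemma LH: "(\<Sum>q\<in>UNIV. L q * H q a) = X a"
  using HL[of a] by (simp add: symH mult.commute)

lemma Lacc: "(\<Sum>b\<in>UNIV. L b * (\<Sum>a\<in>UNIV. X a * Cov a b)) = 1/2 * (\<Sum>a\<in>UNIV. X a * DMu a)"
proof -
  have "(\<Sum>b\<in>UNIV. L b * (\<Sum>a\<in>UNIV. X a * Cov a b)) = (\<Sum>b\<in>UNIV. \<Sum>a\<in>UNIV. X a * (L b * Cov a b))"
    by (simp add: sum_distrib_left mult_ac)
  also have "\<dots> = (\<Sum>a\<in>UNIV. \<Sum>b\<in>UNIV. X a * (L b * Cov a b))" by (rule sum.swap)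
  also have "\<dots> = (\<Sum>a\<in>UNIV. X a * (1/2 * DMu a))" by (simp add: sum_distrib_left[symmetric] L2)
  finally show ?thesis by (simp add: sum_distrib_left mult_ac)
qed

lemma Lgu: "(\<Sum>b\<in>UNIV. L b * (\<Sum>a\<in>UNIV. H b a * DMu a)) = (\<Sum>a\<in>UNIV. X a * DMu a)"
proof -
  have "(\<Sum>b\<in>UNIV. L b * (\<Sum>a\<in>UNIV. H b a * DMu a)) = (\<Sum>a\<in>UNIV. (\<Sum>b\<in>UNIV. L b * H b a) * DMu a)"
    by (rule contract)
  thus ?thesis by (simp add: LH)
qed

lemma divT: "(\<Sum>a\<in>UNIV. (4*(F3*DMu a*X a*X b + F2*dX a a*X b + F2*X a*dX a b) + 2*(F2*DMu a*H a b + F1*dH a a b))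
     + (\<Sum>c\<in>UNIV. Gam a a c * (4*F2*X c*X b + 2*F1*H c b) + Gam b a c * (4*F2*X a*X c + 2*F1*H a c)))
   = 4*F3*(\<Sum>a\<in>UNIV. X a * DMu a)*X b + 4*F2*(Div*X b + (\<Sum>a\<in>UNIV. X a * Cov a b)) + 2*F2*(\<Sum>a\<in>UNIV. H b a * DMu a)"
proof -
  have "(\<Sum>a\<in>UNIV. (4*(F3*DMu a*X a*X b + F2*dX a a*X b + F2*X a*dX a b) + 2*(F2*DMu a*H a b + F1*dH a a b))
     + (\<Sum>c\<in>UNIV. Gam a a c * (4*F2*X c*X b + 2*F1*H c b) + Gam b a c * (4*F2*X a*X c + 2*F1*H a c)))
   = 4*F3*(\<Sum>a\<in>UNIV. X a * DMu a)*X b + 4*F2*(Div*X b + (\<Sum>a\<in>UNIV. X a * Cov a b)) + 2*F2*(\<Sum>a\<in>UNIV. H b a * DMu a)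
     + 2*F1*(\<Sum>a\<in>UNIV. dH a a b + (\<Sum>c\<in>UNIV. Gam a a c * H c b + Gam b a c * H a c))"
    unfolding Div_def Cov_def
    by (simp add: sum.distrib sum_distrib_left sum_distrib_right algebra_simps symH)
  thus ?thesis by (simp add: L3)
qed

lemma part1:
  assumes E: "\<And>b. 4*F3*Md*X b + 4*F2*(Div*X b + acc b) + 2*F2*gu b = 0"
    and Md: "Md = (\<Sum>a\<in>UNIV. X a * DMu a)"
    and acc: "\<And>b. acc b = (\<Sum>a\<in>UNIV. X a * Cov a b)"
    and gu: "\<And>b. gu b = (\<Sum>a\<in>UNIV. H b a * DMu a)"
    and rel: "Mu * F3 = -(k+1) * F2" and F2: "F2 \<noteq> 0" and Mu: "Mu \<noteq> 0" and k: "k > 0"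
  shows "Md / Mu = Div / k \<and> (\<forall>b. acc b = (Md / Mu) * X b - 1/2 * gu b)"
proof -
  have "(\<Sum>b\<in>UNIV. L b * (4*F3*Md*X b + 4*F2*(Div*X b + acc b) + 2*F2*gu b)) = 0"
    by (simp add: E)
  hence "4*F3*Md*(\<Sum>b\<in>UNIV. L b * X b) + 4*F2*(Div*(\<Sum>b\<in>UNIV. L b * X b) + (\<Sum>b\<in>UNIV. L b * acc b))
        + 2*F2*(\<Sum>b\<in>UNIV. L b * gu b) = 0"
    by (simp add: sum.distrib sum_distrib_left algebra_simps)
  hence "4*F3*Md*Mu + 4*F2*(Div*Mu + 1/2*Md) + 2*F2*Md = 0"
    by (simp add: LX acc gu Lacc Lgu Md)
  hence "4*(Mu*F3)*Md + 4*F2*(Div*Mu + 1/2*Md) + 2*F2*Md = 0" by (simp add: algebra_simps)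
  hence "F2 * (4*Div*Mu - 4*k*Md) = 0" unfolding rel by (simp add: algebra_simps)
  hence e1: "Div*Mu = k*Md" using F2 by simp
  hence r1: "Md / Mu = Div / k" using Mu k by (simp add: field_simps)
  have "acc b = (Md / Mu) * X b - 1/2 * gu b" for b
  proof -
    have "4*F3*Md*X b + 4*F2*(Div*X b + acc b) + 2*F2*gu b = 0" by (rule E)
    hence "Mu*(4*F3*Md*X b + 4*F2*(Div*X b + acc b) + 2*F2*gu b) = 0" by simp
    hence "4*(Mu*F3)*Md*X b + 4*F2*((Div*Mu)*X b + Mu*acc b) + 2*F2*Mu*gu b = 0" by (simp add: algebra_simps)
    hence "F2 * (-(4*(k+1))*Md*X b + 4*(k*Md*X b + Mu*acc b) + 2*Mu*gu b) = 0"
      unfolding rel e1 by (simp add: algebra_simps)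
    hence "-(4*(k+1))*Md*X b + 4*(k*Md*X b + Mu*acc b) + 2*Mu*gu b = 0" using F2 by simp
    hence "Mu * acc b = Md * X b - 1/2 * Mu * gu b" by (simp add: algebra_simps)
    thus ?thesis using Mu by (simp add: field_simps)
  qed
  thus ?thesis using r1 by blast
qed

lemma part2a: "2*F1*X a - (\<Sum>b\<in>UNIV. L b * (4*F2*X a*X b + 2*F1*H a b)) = -4*Mu*F2*X a"
proof -
  have "(\<Sum>b\<in>UNIV. L b * (4*F2*X a*X b + 2*F1*H a b)) = 4*F2*X a*(\<Sum>b\<in>UNIV. L b * X b) + 2*F1*(\<Sum>b\<in>UNIV. L b * H b a)"
    by (simp add: sum.distrib sum_distrib_left algebra_simps symH)
  thus ?thesis by (simp add: LX LH)
qed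

lemma part2b: assumes rel: "Mu * F3 = -(k+1) * F2" and e1: "Div*Mu = k*(\<Sum>a\<in>UNIV. X a * DMu a)"
  shows "(\<Sum>a\<in>UNIV. -4*(DMu a*F2*X a + Mu*(F3*DMu a)*X a + Mu*F2*dX a a) + (\<Sum>c\<in>UNIV. Gam a a c * (-4*Mu*F2*X c))) = 0"
proof -
  have "(\<Sum>a\<in>UNIV. -4*(DMu a*F2*X a + Mu*(F3*DMu a)*X a + Mu*F2*dX a a) + (\<Sum>c\<in>UNIV. Gam a a c * (-4*Mu*F2*X c)))
     = -4*((F2 + Mu*F3)*(\<Sum>a\<in>UNIV. X a * DMu a) + F2*(Div*Mu))"
    unfolding Div_def Cov_def by (simp add: sum.distrib sum_subtractf sum_negf sum_distrib_left sum_distrib_right algebra_simps)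
  also have "\<dots> = 0" unfolding rel e1 by (simp add: algebra_simps)
  finally show ?thesis .
qed

definition "SC a b = 1/2 * ((\<Sum>c\<in>UNIV. G b c * Cov a c) + (\<Sum>c\<in>UNIV. G a c * Cov b c))"

lemma XXsc1: "(\<Sum>a\<in>UNIV. \<Sum>b\<in>UNIV. X a * X b * (\<Sum>c\<in>UNIV. G b c * Cov a c)) = 1/2 * (\<Sum>a\<in>UNIV. X a * DMu a)"
proof -
  have "(\<Sum>a\<in>UNIV. \<Sum>b\<in>UNIV. X a * X b * (\<Sum>c\<in>UNIV. G b c * Cov a c))
      = (\<Sum>a\<in>UNIV. X a * (\<Sum>b\<in>UNIV. X b * (\<Sum>c\<in>UNIV. G b c * Cov a c)))"
    by (simp add: sum_distrib_left mult_ac)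
  also have "\<dots> = (\<Sum>a\<in>UNIV. X a * (\<Sum>c\<in>UNIV. (\<Sum>b\<in>UNIV. X b * G b c) * Cov a c))"
    by (simp only: contract)
  also have "\<dots> = (\<Sum>a\<in>UNIV. X a * (\<Sum>c\<in>UNIV. L c * Cov a c))"
    by (simp add: L_def symG mult.commute)
  also have "\<dots> = (\<Sum>a\<in>UNIV. X a * (1/2 * DMu a))" by (simp add: L2)
  finally show ?thesis by (simp add: sum_distrib_left mult_ac)
qed

lemma XXsc: "(\<Sum>a\<in>UNIV. \<Sum>b\<in>UNIV. X a * X b * SC a b) = 1/2 * (\<Sum>a\<in>UNIV. X a * DMu a)"
proof -
  have s: "(\<Sum>a\<in>UNIV. \<Sum>b\<in>UNIV. X a * X b * (\<Sum>c\<in>UNIV. G a c * Cov b c))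
    = (\<Sum>b\<in>UNIV. \<Sum>a\<in>UNIV. X a * X b * (\<Sum>c\<in>UNIV. G a c * Cov b c))" by (rule sum.swap)
  have "\<And>a b. X a * X b * SC a b = 1/2 * (X a * X b * (\<Sum>c\<in>UNIV. G b c * Cov a c)) + 1/2 * (X a * X b * (\<Sum>c\<in>UNIV. G a c * Cov b c))"
    by (simp add: SC_def algebra_simps)
  hence "(\<Sum>a\<in>UNIV. \<Sum>b\<in>UNIV. X a * X b * SC a b)
     = 1/2 * (\<Sum>a\<in>UNIV. \<Sum>b\<in>UNIV. X a * X b * (\<Sum>c\<in>UNIV. G b c * Cov a c))
         + 1/2 * (\<Sum>a\<in>UNIV. \<Sum>b\<in>UNIV. X a * X b * (\<Sum>c\<in>UNIV. G a c * Cov b c))"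
    by (simp only: sum.distrib sum_distrib_left[symmetric])
  also have "(\<Sum>a\<in>UNIV. \<Sum>b\<in>UNIV. X a * X b * (\<Sum>c\<in>UNIV. G a c * Cov b c))
      = (\<Sum>a\<in>UNIV. \<Sum>b\<in>UNIV. X a * X b * (\<Sum>c\<in>UNIV. G b c * Cov a c))"
    unfolding s by (simp add: mult.commute)
  finally show ?thesis by (simp add: XXsc1)
qed

lemma Hsc: "(\<Sum>a\<in>UNIV. \<Sum>b\<in>UNIV. H a b * SC a b) = Div"
proof -
  have 1: "(\<Sum>a\<in>UNIV. \<Sum>b\<in>UNIV. H a b * (\<Sum>c\<in>UNIV. G b c * Cov a c)) = Div"
  proof -
    have "(\<Sum>a\<in>UNIV. \<Sum>b\<in>UNIV. H a b * (\<Sum>c\<in>UNIV. G b c * Cov a c))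
        = (\<Sum>a\<in>UNIV. \<Sum>c\<in>UNIV. (\<Sum>b\<in>UNIV. H a b * G b c) * Cov a c)"
      by (simp only: contract)
    thus ?thesis by (simp add: HG sum_delta_l Div_def)
  qed
  have 2: "(\<Sum>a\<in>UNIV. \<Sum>b\<in>UNIV. H a b * (\<Sum>c\<in>UNIV. G a c * Cov b c)) = Div"
  proof -
    have "(\<Sum>a\<in>UNIV. \<Sum>b\<in>UNIV. H a b * (\<Sum>c\<in>UNIV. G a c * Cov b c))
       = (\<Sum>b\<in>UNIV. \<Sum>a\<in>UNIV. H b a * (\<Sum>c\<in>UNIV. G a c * Cov b c))"
      by (subst sum.swap) (simp add: symH)
    also have "\<dots> = Div" by (simp only: contract) (simp add: HG sum_delta_l Div_def)
    finally show ?thesis .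
  qed
  have "\<And>a b. H a b * SC a b = 1/2 * (H a b * (\<Sum>c\<in>UNIV. G b c * Cov a c)) + 1/2 * (H a b * (\<Sum>c\<in>UNIV. G a c * Cov b c))"
    by (simp add: SC_def algebra_simps)
  hence "(\<Sum>a\<in>UNIV. \<Sum>b\<in>UNIV. H a b * SC a b) = 1/2 * (\<Sum>a\<in>UNIV. \<Sum>b\<in>UNIV. H a b * (\<Sum>c\<in>UNIV. G b c * Cov a c))
      + 1/2 * (\<Sum>a\<in>UNIV. \<Sum>b\<in>UNIV. H a b * (\<Sum>c\<in>UNIV. G a c * Cov b c))"
    by (simp only: sum.distrib sum_distrib_left[symmetric])
  thus ?thesis using 1 2 by simp
qed

lemma XXG: "(\<Sum>a\<in>UNIV. \<Sum>b\<in>UNIV. X a * X b * G a b) = Mu"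
  unfolding Mu_def by (simp add: mult_ac)

lemma XXLL: "(\<Sum>a\<in>UNIV. \<Sum>b\<in>UNIV. X a * X b * (L a * L b)) = Mu * Mu"
proof -
  have "(\<Sum>a\<in>UNIV. \<Sum>b\<in>UNIV. X a * X b * (L a * L b)) = (\<Sum>a\<in>UNIV. L a * X a) * (\<Sum>b\<in>UNIV. L b * X b)"
    by (simp add: sum_product mult_ac)
  thus ?thesis by (simp add: LX)
qed

lemma HGtr: "(\<Sum>a\<in>UNIV. \<Sum>b\<in>UNIV. H a b * G a b) = real CARD('n)"
proof -
  have "(\<Sum>a\<in>UNIV. \<Sum>b\<in>UNIV. H a b * G a b) = (\<Sum>a\<in>UNIV. (\<Sum>b\<in>UNIV. H a b * G b a))"
    by (simp add: symG)
  also have "\<dots> = (\<Sum>a\<in>(UNIV::'n set). 1)" by (simp add: HG)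
  finally show ?thesis by simp
qed

lemma HLL: "(\<Sum>a\<in>UNIV. \<Sum>b\<in>UNIV. H a b * (L a * L b)) = Mu"
proof -
  have "(\<Sum>a\<in>UNIV. \<Sum>b\<in>UNIV. H a b * (L a * L b)) = (\<Sum>a\<in>UNIV. L a * (\<Sum>b\<in>UNIV. H a b * L b))"
    by (simp add: sum_distrib_left mult_ac)
  also have "\<dots> = (\<Sum>a\<in>UNIV. L a * X a)" by (simp add: HL)
  finally show ?thesis by (simp add: LX)
qed

lemma part3:
  assumes sc: "\<And>a b. SC a b = t * G a b + s * (L a * L b)"
    and e1: "Div*Mu = (real CARD('n)/2)*(\<Sum>a\<in>UNIV. X a * DMu a)"
    and Mu: "Mu \<noteq> 0" and dd: "real CARD('n) \<ge> 3"
  shows "s = 0 \<and> t = Div / real CARD('n)"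
proof -
  let ?d = "real CARD('n)"
  let ?Md = "\<Sum>a\<in>UNIV. X a * DMu a"
  have "1/2 * ?Md = (\<Sum>a\<in>UNIV. \<Sum>b\<in>UNIV. X a * X b * (t * G a b + s * (L a * L b)))"
    unfolding XXsc[symmetric] by (simp only: sc)
  also have "\<dots> = t * (\<Sum>a\<in>UNIV. \<Sum>b\<in>UNIV. X a * X b * G a b) + s * (\<Sum>a\<in>UNIV. \<Sum>b\<in>UNIV. X a * X b * (L a * L b))"
    by (simp add: sum.distrib sum_distrib_left algebra_simps)
  finally have c1: "1/2 * ?Md = t * Mu + s * (Mu * Mu)" by (simp add: XXG XXLL)
  have "Div = (\<Sum>a\<in>UNIV. \<Sum>b\<in>UNIV. H a b * (t * G a b + s * (L a * L b)))"
    unfolding Hsc[symmetric] by (simp only: sc)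
  also have "\<dots> = t * (\<Sum>a\<in>UNIV. \<Sum>b\<in>UNIV. H a b * G a b) + s * (\<Sum>a\<in>UNIV. \<Sum>b\<in>UNIV. H a b * (L a * L b))"
    by (simp add: sum.distrib sum_distrib_left algebra_simps)
  finally have c2: "Div = t * ?d + s * Mu" by (simp add: HGtr HLL)
  have "Div * Mu = ?d * (t * Mu + s * (Mu * Mu))" using e1 c1 by (simp add: algebra_simps)
  hence "(t * ?d + s * Mu) * Mu = ?d * (t * Mu + s * (Mu * Mu))" using c2 by simp
  hence "s * Mu * Mu * (?d - 1) = 0" by (simp add: algebra_simps)
  hence s0: "s = 0" using Mu dd by simp
  thus ?thesis using c2 dd by simp
qed

end


lemma sum_delta_outer: "(\<Sum>p\<in>UNIV. \<Sum>q\<in>UNIV. (if p = a then 1 else 0) * f p q) = (\<Sum>q\<in>UNIV. (f (a::'n::finite) q::real))"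
proof -
  have "(\<Sum>p\<in>UNIV. \<Sum>q\<in>UNIV. (if p = a then 1 else 0) * f p q) = (\<Sum>p\<in>UNIV. (if p = a then 1 else 0) * (\<Sum>q\<in>UNIV. f p q))"
    by (simp only: sum_distrib_left)
  also have "\<dots> = (\<Sum>q\<in>UNIV. f a q)" by (rule sum_delta_l')
  finally show ?thesis .
qed

lemma comp_diff: "(F has_real_derivative F') (at (f x)) \<Longrightarrow> f differentiable (at x) \<Longrightarrow> (\<lambda>y. F (f y)) differentiable (at x)"
  unfolding differentiable_def has_field_derivative_def by (blast intro: has_derivative_compose)

lemma dHf_from:
  fixes G H :: "'n::finite \<Rightarrow> 'n \<Rightarrow> real" and dG dH :: "'n \<Rightarrow> 'n \<Rightarrow> 'n \<Rightarrow> real"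
  assumes HG: "\<And>a b. (\<Sum>c\<in>UNIV. H a c * G c b) = (if a = b then 1 else 0)"
    and R: "\<And>a b. (\<Sum>c\<in>UNIV. G a c * dH e c b + dG e a c * H c b) = 0"
  shows "dH e a b = - (\<Sum>p\<in>UNIV. \<Sum>q\<in>UNIV. H a p * dG e p q * H q b)"
proof -
  have R': "\<And>p. (\<Sum>c\<in>UNIV. G p c * dH e c b) = - (\<Sum>q\<in>UNIV. dG e p q * H q b)"
    using R by (simp add: sum.distrib eq_neg_iff_add_eq_0)
  have "dH e a b = (\<Sum>c\<in>UNIV. (if a = c then 1 else 0) * dH e c b)" by (simp only: sum_delta_l)
  also have "\<dots> = (\<Sum>c\<in>UNIV. (\<Sum>p\<in>UNIV. H a p * G p c) * dH e c b)" by (simp only: HG)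
  also have "\<dots> = (\<Sum>p\<in>UNIV. H a p * (\<Sum>c\<in>UNIV. G p c * dH e c b))" by (simp only: contract)
  also have "\<dots> = (\<Sum>p\<in>UNIV. H a p * (- (\<Sum>q\<in>UNIV. dG e p q * H q b)))" by (simp only: R')
  also have "\<dots> = - (\<Sum>p\<in>UNIV. \<Sum>q\<in>UNIV. H a p * dG e p q * H q b)"
    by (simp add: sum_distrib_left sum_negf mult_ac)
  finally show ?thesis .
qed

locale setting =
  fixes U :: "(real^'n) set" and g :: "real^'n \<Rightarrow> real^'n^'n" and xi :: "real^'n \<Rightarrow> real^'n"
    and c0 :: real and d :: nat
  assumes d_def: "d = CARD('n)" and d3: "d \<ge> 3"
    and U_open: "open U"
    and g_smooth: "\<And>a b. smooth_on U (\<lambda>x. g x $ a $ b)"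
    and g_lor: "\<And>x. x \<in> U \<Longrightarrow> lorentzian (g x)"
    and xi_smooth: "\<And>a. smooth_on U (\<lambda>x. xi x $ a)"
    and timelike: "\<And>x. x \<in> U \<Longrightarrow> mu g xi x < 0"
    and c0_nz: "c0 \<noteq> 0"
    and conserv: "\<And>x b. x \<in> U \<Longrightarrow> div_tensor g (T0 c0 d g xi) x b = 0"
begin

lemma ginv_props: assumes "y \<in> U"
  shows "g y $ a $ b = g y $ b $ a" "ginv g y $ a $ b = ginv g y $ b $ a"
    "(\<Sum>c\<in>UNIV. g y $ a $ c * ginv g y $ c $ b) = (if a = b then 1 else 0)"
proof -
  have inv: "invertible (g y)" using lor_inv g_lor assms by blast
  have tr: "transpose (g y) = g y" using g_lor[OF assms] unfolding lorentzian_def by blast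
  show "g y $ a $ b = g y $ b $ a" using sym_entry[OF tr] .
  show "ginv g y $ a $ b = ginv g y $ b $ a" unfolding ginv_def using sym_entry[OF minv_sym[OF inv tr]] .
  show "(\<Sum>c\<in>UNIV. g y $ a $ c * ginv g y $ c $ b) = (if a = b then 1 else 0)"
    unfolding ginv_def using mult_entry minv[OF inv] by blast
qed

lemma dg: "x \<in> U \<Longrightarrow> (\<lambda>y. g y $ a $ b) differentiable (at x)"
  using g_smooth smooth_diff by blast
lemma dxi: "x \<in> U \<Longrightarrow> (\<lambda>y. xi y $ a) differentiable (at x)"
  using xi_smooth smooth_diff by blast
lemma dginv: "x \<in> U \<Longrightarrow> (\<lambda>y. ginv g y $ a $ b) differentiable (at x)"
  unfolding ginv_def
  by (rule minv_differentiable[OF U_open]) (auto intro: lor_inv g_lor dg)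

lemma mu_fun: "mu g xi = (\<lambda>y. \<Sum>a\<in>UNIV. \<Sum>b\<in>UNIV. g y $ a $ b * xi y $ a * xi y $ b)"
  by (rule ext) (simp add: mu_def)

lemma dmu: "x \<in> U \<Longrightarrow> mu g xi differentiable (at x)"
  unfolding mu_fun by (simp add: dg dxi)

abbreviation "GG x \<equiv> (\<lambda>a b. g x $ a $ b)"
abbreviation "HH x \<equiv> (\<lambda>a b. ginv g x $ a $ b)"
abbreviation "dGG x \<equiv> (\<lambda>c a b. pd (\<lambda>y. g y $ a $ b) c x)"
abbreviation "dHH x \<equiv> (\<lambda>c a b. pd (\<lambda>y. ginv g y $ a $ b) c x)"
abbreviation "XX x \<equiv> (\<lambda>a. xi x $ a)"
abbreviation "dXX x \<equiv> (\<lambda>c a. pd (\<lambda>y. xi y $ a) c x)"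

lemma pt_at: assumes x: "x \<in> U" shows "pt (GG x) (HH x) (dGG x) (dHH x)"
proof
  fix a b c e
  show "g x $ a $ b = g x $ b $ a" using ginv_props[OF x] by blast
  show "ginv g x $ a $ b = ginv g x $ b $ a" using ginv_props[OF x] by blast
  show GH: "(\<Sum>c\<in>UNIV. g x $ a $ c * ginv g x $ c $ b) = (if a = b then 1 else 0)" using ginv_props[OF x] by blast
  show "pd (\<lambda>y. g y $ a $ b) c x = pd (\<lambda>y. g y $ b $ a) c x"
    by (rule pd_local[OF U_open x]) (auto simp: ginv_props dg x)
  have HG: "\<And>a b. (\<Sum>c\<in>UNIV. ginv g x $ a $ c * g x $ c $ b) = (if a = b then 1 else 0)"
  proof -
    fix a b
    have "(\<Sum>c\<in>UNIV. ginv g x $ a $ c * g x $ c $ b) = (\<Sum>c\<in>UNIV. g x $ b $ c * ginv g x $ c $ a)"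
      using ginv_props[OF x] by (simp add: mult.commute)
    thus "(\<Sum>c\<in>UNIV. ginv g x $ a $ c * g x $ c $ b) = (if a = b then 1 else 0)"
      using ginv_props(3)[OF x, of b a] by (simp add: eq_commute)
  qed
  have R: "\<And>a b. (\<Sum>c\<in>UNIV. g x $ a $ c * pd (\<lambda>y. ginv g y $ c $ b) e x + pd (\<lambda>y. g y $ a $ c) e x * ginv g x $ c $ b) = 0"
  proof -
    fix a b
    have "pd (\<lambda>y. \<Sum>c\<in>UNIV. g y $ a $ c * ginv g y $ c $ b) e x = pd (\<lambda>y. if a = b then 1 else 0) e x"
      by (rule pd_local[OF U_open x]) (simp_all add: ginv_props(3))
    also have "\<dots> = 0" by (rule pd_const)
    finally have "pd (\<lambda>y. \<Sum>c\<in>UNIV. g y $ a $ c * ginv g y $ c $ b) e x = 0" .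
    moreover have "pd (\<lambda>y. \<Sum>c\<in>UNIV. g y $ a $ c * ginv g y $ c $ b) e x
        = (\<Sum>c\<in>UNIV. g x $ a $ c * pd (\<lambda>y. ginv g y $ c $ b) e x + pd (\<lambda>y. g y $ a $ c) e x * ginv g x $ c $ b)"
      by (simp add: pd_sum pd_mult dg dginv x)
    ultimately show "(\<Sum>c\<in>UNIV. g x $ a $ c * pd (\<lambda>y. ginv g y $ c $ b) e x + pd (\<lambda>y. g y $ a $ c) e x * ginv g x $ c $ b) = 0"
      by simp
  qed
  show "pd (\<lambda>y. ginv g y $ a $ b) e x = - (\<Sum>p\<in>UNIV. \<Sum>q\<in>UNIV. ginv g x $ a $ p * pd (\<lambda>y. g y $ p $ q) e x * ginv g x $ q $ b)"
    by (rule dHf_from[where G="GG x" and H="HH x" and dG="dGG x" and dH="dHH x", OF HG R])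
qed

lemma point1: assumes x: "x \<in> U"
  shows "dotd xi (mu g xi) x / mu g xi x = 2 * div_vec g xi x / real d
     \<and> (\<forall>b. accel g xi x b = (dotd xi (mu g xi) x / mu g xi x) * xi x $ b - (1/2) * grad_up g (mu g xi) x b)
     \<and> div_vec g xi x * mu g xi x = (real d/2) * dotd xi (mu g xi) x"
proof -
  interpret P: pt "GG x" "HH x" "dGG x" "dHH x" "XX x" "dXX x" by (rule pt_at[OF x])
  have chr: "\<And>a b c. christoffel g x a b c = P.Gam a b c" by (simp add: christoffel_def P.Gam_def)
  have cov: "\<And>a b. covd_vec g xi x a b = P.Cov a b" by (simp add: covd_vec_def P.Cov_def chr)
  have div: "div_vec g xi x = P.Div" by (simp add: div_vec_def P.Div_def cov)
  have muv: "mu g xi x = P.Mu" by (simp add: mu_def P.Mu_def)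
  have pdmu: "\<And>c. pd (mu g xi) c x = P.DMu c"
    unfolding mu_fun by (simp add: pd_sum pd_mult dg dxi x P.DMu_def algebra_simps)
  have dotd: "dotd xi (mu g xi) x = (\<Sum>a\<in>UNIV. xi x $ a * P.DMu a)" by (simp add: dotd_def pdmu)
  have acc: "\<And>b. accel g xi x b = (\<Sum>a\<in>UNIV. xi x $ a * P.Cov a b)" by (simp add: accel_def cov)
  have gu: "\<And>b. grad_up g (mu g xi) x b = (\<Sum>a\<in>UNIV. ginv g x $ b $ a * P.DMu a)" by (simp add: grad_up_def pdmu)
  have neg: "P.Mu < 0" using timelike[OF x] muv by simp
  define F1 where "F1 = deriv (chi0 c0 d)"
  define F2 where "F2 = deriv F1"
  have dF2: "(F2 has_real_derivative E3 c0 d (mu g xi x)) (at (mu g xi x))"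
    unfolding F2_def F1_def using F2_d neg muv by simp
  have dF1: "(F1 has_real_derivative F2 (mu g xi x)) (at (mu g xi x))"
    unfolding F2_def F1_def using F1_d F2_eq neg muv by simp
  have pdF2: "\<And>c. pd (\<lambda>y. F2 (mu g xi y)) c x = E3 c0 d P.Mu * P.DMu c"
    using pd_comp[OF dF2 dmu[OF x]] pdmu muv by simp
  have pdF1: "\<And>c. pd (\<lambda>y. F1 (mu g xi y)) c x = F2 P.Mu * P.DMu c"
    using pd_comp[OF dF1 dmu[OF x]] pdmu muv by simp
  have dfF2: "(\<lambda>y. F2 (mu g xi y)) differentiable (at x)" by (rule comp_diff[OF dF2 dmu[OF x]])
  have dfF1: "(\<lambda>y. F1 (mu g xi y)) differentiable (at x)" by (rule comp_diff[OF dF1 dmu[OF x]])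
  have Tf: "\<And>a b. (\<lambda>y. T0 c0 d g xi y $ a $ b) = (\<lambda>y. 4 * F2 (mu g xi y) * xi y $ a * xi y $ b + 2 * F1 (mu g xi y) * ginv g y $ a $ b)"
    by (rule ext) (simp add: T0_def F1_def F2_def)
  have pdT: "\<And>a b c. pd (\<lambda>y. T0 c0 d g xi y $ a $ b) c x =
     4*(E3 c0 d P.Mu*P.DMu c*xi x $ a*xi x $ b + F2 P.Mu*pd (\<lambda>y. xi y $ a) c x*xi x $ b + F2 P.Mu*xi x $ a*pd (\<lambda>y. xi y $ b) c x)
     + 2*(F2 P.Mu*P.DMu c*ginv g x $ a $ b + F1 P.Mu*pd (\<lambda>y. ginv g y $ a $ b) c x)"
    unfolding Tf by (simp add: pd_add pd_mult pd_const pdF2 pdF1 dfF2 dfF1 dxi dginv x muv algebra_simps)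
  have Tx: "\<And>a b. T0 c0 d g xi x $ a $ b = 4 * F2 P.Mu * xi x $ a * xi x $ b + 2 * F1 P.Mu * ginv g x $ a $ b"
    by (simp add: T0_def F1_def F2_def muv)
  have E: "\<And>b. 4*E3 c0 d P.Mu*(\<Sum>a\<in>UNIV. xi x $ a * P.DMu a)*xi x $ b
      + 4*F2 P.Mu*(P.Div*xi x $ b + (\<Sum>a\<in>UNIV. xi x $ a * P.Cov a b)) + 2*F2 P.Mu*(\<Sum>a\<in>UNIV. ginv g x $ b $ a * P.DMu a) = 0"
  proof -
    fix b
    have "div_tensor g (T0 c0 d g xi) x b = (\<Sum>a\<in>UNIV. (4*(E3 c0 d P.Mu*P.DMu a*xi x $ a*xi x $ b + F2 P.Mu*pd (\<lambda>y. xi y $ a) a x*xi x $ b + F2 P.Mu*xi x $ a*pd (\<lambda>y. xi y $ b) a x)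
     + 2*(F2 P.Mu*P.DMu a*ginv g x $ a $ b + F1 P.Mu*pd (\<lambda>y. ginv g y $ a $ b) a x))
     + (\<Sum>c\<in>UNIV. P.Gam a a c * (4*F2 P.Mu*xi x $ c*xi x $ b + 2*F1 P.Mu*ginv g x $ c $ b) + P.Gam b a c * (4*F2 P.Mu*xi x $ a*xi x $ c + 2*F1 P.Mu*ginv g x $ a $ c)))"
      unfolding div_tensor_def pdT chr Tx by (rule refl)
    also have "\<dots> = 4*E3 c0 d P.Mu*(\<Sum>a\<in>UNIV. xi x $ a * P.DMu a)*xi x $ b
      + 4*F2 P.Mu*(P.Div*xi x $ b + (\<Sum>a\<in>UNIV. xi x $ a * P.Cov a b)) + 2*F2 P.Mu*(\<Sum>a\<in>UNIV. ginv g x $ b $ a * P.DMu a)"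
      by (rule P.divT)
    finally show "?thesis b" using conserv[OF x] by simp
  qed
  have rel: "P.Mu * E3 c0 d P.Mu = -(real d/2 + 1) * F2 P.Mu"
    using E3_rel[OF neg] F2_eq[OF neg] unfolding F2_def F1_def by simp
  have F2nz: "F2 P.Mu \<noteq> 0" using E2_nz[OF neg c0_nz d3] F2_eq[OF neg] unfolding F2_def F1_def by simp
  have k: "real d / 2 > 0" using d3 by simp
  have r: "(\<Sum>a\<in>UNIV. xi x $ a * P.DMu a) / P.Mu = P.Div / (real d/2) \<and>
    (\<forall>b. (\<Sum>a\<in>UNIV. xi x $ a * P.Cov a b) = ((\<Sum>a\<in>UNIV. xi x $ a * P.DMu a) / P.Mu) * xi x $ b - 1/2 * (\<Sum>a\<in>UNIV. ginv g x $ b $ a * P.DMu a))"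
    by (rule P.part1[OF E refl refl refl rel F2nz]) (use neg k in auto)
  have e1: "P.Div * P.Mu = (real d/2) * (\<Sum>a\<in>UNIV. xi x $ a * P.DMu a)"
    using r neg k by (simp add: field_simps)
  have r1: "(\<Sum>a\<in>UNIV. xi x $ a * P.DMu a) / P.Mu = 2 * P.Div / real d"
    using r by simp
  show ?thesis unfolding dotd acc gu div muv using r1 e1 r by blast
qed

lemma point2: assumes x: "x \<in> U"
  shows "S0 c0 d g xi x = (\<chi> a. - 4 * mu g xi x * deriv (deriv (chi0 c0 d)) (mu g xi x) * xi x $ a)"
proof -
  interpret P: pt "GG x" "HH x" "dGG x" "dHH x" "XX x" "dXX x" by (rule pt_at[OF x])
  have muv: "mu g xi x = P.Mu" by (simp add: mu_def P.Mu_def)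
  have neg: "P.Mu < 0" using timelike[OF x] muv by simp
  define F1 where "F1 = deriv (chi0 c0 d)"
  define F2 where "F2 = deriv F1"
  define \<eta>0 where "\<eta>0 = lower g xi x"
  have eta: "\<And>b. \<eta>0 $ b = P.L b" by (simp add: \<eta>0_def lower_def P.L_def)
  define Q where "Q = (\<lambda>\<eta>::real^'n. \<Sum>p\<in>UNIV. \<Sum>q\<in>UNIV. ginv g x $ p $ q * \<eta> $ p * \<eta> $ q)"
  have Qv: "Q \<eta>0 = P.Mu" using P.HLL by (simp add: Q_def eta mult_ac)
  have hQ: "(Q has_derivative (\<lambda>h. \<Sum>p\<in>UNIV. \<Sum>q\<in>UNIV. ginv g x $ p $ q * (\<eta>0 $ p * h $ q + h $ p * \<eta>0 $ q))) (at \<eta>0)"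
    unfolding Q_def
    apply (rule has_derivative_eq_rhs)
     apply (rule has_derivative_sum, rule has_derivative_sum, rule has_derivative_mult, rule has_derivative_mult)
       apply (rule has_derivative_const)
      apply (rule bounded_linear_imp_has_derivative, rule bounded_linear_vec_nth)
     apply (rule bounded_linear_imp_has_derivative, rule bounded_linear_vec_nth)
    apply (simp add: algebra_simps)
    done
  have hchi: "(chi0 c0 d has_derivative (\<lambda>t. F1 P.Mu * t)) (at (Q \<eta>0))"
    using chi_d1[OF neg, of c0 d] F1_eq[OF neg] unfolding Qv F1_def has_field_derivative_def by simp
  have hcomp: "((\<lambda>\<eta>. chi0 c0 d (Q \<eta>)) has_derivative (\<lambda>h. F1 P.Mu * (\<Sum>p\<in>UNIV. \<Sum>q\<in>UNIV. ginv g x $ p $ q * (\<eta>0 $ p * h $ q + h $ p * \<eta>0 $ q)))) (at \<eta>0)"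
    using has_derivative_compose[OF hQ hchi] by simp
  have val: "\<And>a. (\<Sum>p\<in>UNIV. \<Sum>q\<in>UNIV. ginv g x $ p $ q * (P.L p * axis a 1 $ q + axis a 1 $ p * P.L q)) = 2 * xi x $ a"
  proof -
    fix a
    have "\<And>p q. ginv g x $ p $ q * (P.L p * axis a 1 $ q + axis a 1 $ p * P.L q)
        = ginv g x $ p $ q * P.L p * (if q = a then 1 else 0) + (if p = a then 1 else 0) * (ginv g x $ p $ q * P.L q)"
      by (simp add: axis_def eta algebra_simps)
    hence "(\<Sum>p\<in>UNIV. \<Sum>q\<in>UNIV. ginv g x $ p $ q * (P.L p * axis a 1 $ q + axis a 1 $ p * P.L q))
       = (\<Sum>p\<in>UNIV. ginv g x $ p $ a * P.L p) + (\<Sum>q\<in>UNIV. ginv g x $ a $ q * P.L q)"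
      by (simp only: sum.distrib sum_delta_r' sum_delta_outer)
    also have "\<dots> = 2 * xi x $ a" using P.HL[of a] P.LH[of a] by (simp add: mult.commute)
    finally show "?thesis a" .
  qed
  have Tx: "\<And>a b. T0 c0 d g xi x $ a $ b = 4 * F2 P.Mu * xi x $ a * xi x $ b + 2 * F1 P.Mu * ginv g x $ a $ b"
    by (simp add: T0_def F1_def F2_def muv)
  have "\<And>a. S0 c0 d g xi x $ a = 2 * F1 P.Mu * xi x $ a - (\<Sum>b\<in>UNIV. P.L b * (4 * F2 P.Mu * xi x $ a * xi x $ b + 2 * F1 P.Mu * ginv g x $ a $ b))"
  proof -
    fix a
    have fd: "frechet_derivative (\<lambda>\<eta>. chi0 c0 d (\<Sum>p\<in>UNIV. \<Sum>q\<in>UNIV. ginv g x $ p $ q * \<eta> $ p * \<eta> $ q)) (at \<eta>0)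
      = (\<lambda>h. F1 P.Mu * (\<Sum>p\<in>UNIV. \<Sum>q\<in>UNIV. ginv g x $ p $ q * (\<eta>0 $ p * h $ q + h $ p * \<eta>0 $ q)))"
      using frechet_derivative_at[OF hcomp] by (simp add: Q_def)
    show "S0 c0 d g xi x $ a = 2 * F1 P.Mu * xi x $ a - (\<Sum>b\<in>UNIV. P.L b * (4 * F2 P.Mu * xi x $ a * xi x $ b + 2 * F1 P.Mu * ginv g x $ a $ b))"
      unfolding S0_def \<eta>0_def[symmetric] by (simp add: fd val eta Tx)
  qed
  also have "\<And>a. \<dots>a = -4 * P.Mu * F2 P.Mu * xi x $ a" by (rule P.part2a)
  finally show ?thesis by (simp add: vec_eq_iff muv F2_def F1_def)
qed

lemma point3: assumes x: "x \<in> U"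
  shows "div_vec g (S0 c0 d g xi) x = 0"
proof -
  interpret P: pt "GG x" "HH x" "dGG x" "dHH x" "XX x" "dXX x" by (rule pt_at[OF x])
  have chr: "\<And>a b c. christoffel g x a b c = P.Gam a b c" by (simp add: christoffel_def P.Gam_def)
  have cov: "\<And>a b. covd_vec g xi x a b = P.Cov a b" by (simp add: covd_vec_def P.Cov_def chr)
  have div: "div_vec g xi x = P.Div" by (simp add: div_vec_def P.Div_def cov)
  have muv: "mu g xi x = P.Mu" by (simp add: mu_def P.Mu_def)
  have pdmu: "\<And>c. pd (mu g xi) c x = P.DMu c"
    unfolding mu_fun by (simp add: pd_sum pd_mult dg dxi x P.DMu_def algebra_simps)
  have dotd: "dotd xi (mu g xi) x = (\<Sum>a\<in>UNIV. xi x $ a * P.DMu a)" by (simp add: dotd_def pdmu)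
  have neg: "P.Mu < 0" using timelike[OF x] muv by simp
  define F1 where "F1 = deriv (chi0 c0 d)"
  define F2 where "F2 = deriv F1"
  have dF2: "(F2 has_real_derivative E3 c0 d (mu g xi x)) (at (mu g xi x))"
    unfolding F2_def F1_def using F2_d neg muv by simp
  have pdF2: "\<And>c. pd (\<lambda>y. F2 (mu g xi y)) c x = E3 c0 d P.Mu * P.DMu c"
    using pd_comp[OF dF2 dmu[OF x]] pdmu muv by simp
  have dfF2: "(\<lambda>y. F2 (mu g xi y)) differentiable (at x)" by (rule comp_diff[OF dF2 dmu[OF x]])
  have e1: "P.Div * P.Mu = (real d/2) * (\<Sum>a\<in>UNIV. xi x $ a * P.DMu a)"
    using point1[OF x] unfolding div muv dotd by blast
  have rel: "P.Mu * E3 c0 d P.Mu = -(real d/2 + 1) * F2 P.Mu"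
    using E3_rel[OF neg] F2_eq[OF neg] unfolding F2_def F1_def by simp
  have Sf: "\<And>a c. pd (\<lambda>y. S0 c0 d g xi y $ a) c x = pd (\<lambda>y. -4 * mu g xi y * F2 (mu g xi y) * xi y $ a) c x"
    by (rule pd_local[OF U_open x]) (simp_all add: point2 F2_def F1_def dmu dfF2[unfolded F2_def F1_def] dxi x)
  have Sx: "\<And>c. S0 c0 d g xi x $ c = -4 * P.Mu * F2 P.Mu * xi x $ c"
    by (simp add: point2[OF x] F2_def F1_def muv)
  have pdS: "\<And>a c. pd (\<lambda>y. -4 * mu g xi y * F2 (mu g xi y) * xi y $ a) c x
     = -4*(P.DMu c*F2 P.Mu*xi x $ a + P.Mu*(E3 c0 d P.Mu*P.DMu c)*xi x $ a + P.Mu*F2 P.Mu*pd (\<lambda>y. xi y $ a) c x)"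
  proof -
    fix a c
    have dm: "(\<lambda>y. -4 * mu g xi y) differentiable (at x)" using dmu[OF x] by simp
    have dm2: "(\<lambda>y. -4 * mu g xi y * F2 (mu g xi y)) differentiable (at x)" by (rule differentiable_mult[OF dm dfF2])
    have "pd (\<lambda>y. -4 * mu g xi y * F2 (mu g xi y) * xi y $ a) c x
      = (-4 * mu g xi x * F2 (mu g xi x)) * pd (\<lambda>y. xi y $ a) c x + pd (\<lambda>y. -4 * mu g xi y * F2 (mu g xi y)) c x * xi x $ a"
      by (rule pd_mult[OF dm2 dxi[OF x]])
    also have "pd (\<lambda>y. -4 * mu g xi y * F2 (mu g xi y)) c x = (-4 * mu g xi x) * pd (\<lambda>y. F2 (mu g xi y)) c x + pd (\<lambda>y. -4 * mu g xi y) c x * F2 (mu g xi x)"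
      by (rule pd_mult[OF dm dfF2])
    also have "pd (\<lambda>y. -4 * mu g xi y) c x = -4 * pd (mu g xi) c x"
      using pd_cmult[OF dmu[OF x], of "-4" c] by simp
    finally show "?thesis a c" by (simp add: pdF2 pdmu muv algebra_simps)
  qed
  have "div_vec g (S0 c0 d g xi) x = (\<Sum>a\<in>UNIV. -4*(P.DMu a*F2 P.Mu*xi x $ a + P.Mu*(E3 c0 d P.Mu*P.DMu a)*xi x $ a + P.Mu*F2 P.Mu*pd (\<lambda>y. xi y $ a) a x)
       + (\<Sum>c\<in>UNIV. P.Gam a a c * (-4*P.Mu*F2 P.Mu*xi x $ c)))"
    unfolding div_vec_def covd_vec_def Sf chr Sx pdS by (rule refl)
  also have "\<dots> = 0" by (rule P.part2b[OF rel e1])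
  finally show ?thesis .
qed

lemma point4: assumes x: "x \<in> U"
    and sc: "\<And>a b. symcov g xi x a b = tx * g x $ a $ b + sx * lower g xi x $ a * lower g xi x $ b"
  shows "sx = 0 \<and> tx = div_vec g xi x / real d"
proof -
  interpret P: pt "GG x" "HH x" "dGG x" "dHH x" "XX x" "dXX x" by (rule pt_at[OF x])
  have chr: "\<And>a b c. christoffel g x a b c = P.Gam a b c" by (simp add: christoffel_def P.Gam_def)
  have cov: "\<And>a b. covd_vec g xi x a b = P.Cov a b" by (simp add: covd_vec_def P.Cov_def chr)
  have div: "div_vec g xi x = P.Div" by (simp add: div_vec_def P.Div_def cov)
  have muv: "mu g xi x = P.Mu" by (simp add: mu_def P.Mu_def)
  have pdmu: "\<And>c. pd (mu g xi) c x = P.DMu c"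
    unfolding mu_fun by (simp add: pd_sum pd_mult dg dxi x P.DMu_def algebra_simps)
  have dotd: "dotd xi (mu g xi) x = (\<Sum>a\<in>UNIV. xi x $ a * P.DMu a)" by (simp add: dotd_def pdmu)
  have neg: "P.Mu < 0" using timelike[OF x] muv by simp
  have e1: "P.Div * P.Mu = (real CARD('n)/2) * (\<Sum>a\<in>UNIV. xi x $ a * P.DMu a)"
    using point1[OF x] unfolding div muv dotd d_def by blast
  have sc': "\<And>a b. P.SC a b = tx * g x $ a $ b + sx * (P.L a * P.L b)"
    using sc by (simp add: symcov_def P.SC_def cov lower_def P.L_def mult.assoc)
  have "sx = 0 \<and> tx = P.Div / real CARD('n)"
    by (rule P.part3[OF sc' e1]) (use neg d3 d_def in auto)
  thus ?thesis unfolding div d_def .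
qed

end

theorem mainTheorem5:
  fixes U :: "(real^'n) set" and g :: "real^'n \<Rightarrow> real^'n^'n" and xi :: "real^'n \<Rightarrow> real^'n"
    and c0 :: real and d :: nat
  assumes d_def: "d = CARD('n)" and d3: "d \<ge> 3"
    and U_open: "open U"
    and g_smooth: "\<And>a b. smooth_on U (\<lambda>x. g x $ a $ b)"
    and g_lor: "\<And>x. x \<in> U \<Longrightarrow> lorentzian (g x)"
    and xi_smooth: "\<And>a. smooth_on U (\<lambda>x. xi x $ a)"
    and timelike: "\<And>x. x \<in> U \<Longrightarrow> mu g xi x < 0"
    and c0_nz: "c0 \<noteq> 0"
    and conserv: "\<And>x b. x \<in> U \<Longrightarrow> div_tensor g (T0 c0 d g xi) x b = 0"
  shows "(\<forall>x\<in>U. dotd xi (mu g xi) x / mu g xi x = 2 * div_vec g xi x / real d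
            \<and> (\<forall>b. accel g xi x b = (dotd xi (mu g xi) x / mu g xi x) * xi x $ b
                                     - (1/2) * grad_up g (mu g xi) x b))
       \<and> (\<forall>x\<in>U. S0 c0 d g xi x
                  = (\<chi> a. - 4 * mu g xi x * deriv (deriv (chi0 c0 d)) (mu g xi x) * xi x $ a)
                \<and> div_vec g (S0 c0 d g xi) x = 0)
       \<and> (\<forall>t s :: real^'n \<Rightarrow> real.
            (\<forall>x\<in>U. \<forall>a b. symcov g xi x a b = t x * g x $ a $ b + s x * lower g xi x $ a * lower g xi x $ b)
            \<longrightarrow> (\<forall>x\<in>U. s x = 0 \<and> t x = div_vec g xi x / real d
                      \<and> (\<forall>a b. symcov g xi x a b = (div_vec g xi x / real d) * g x $ a $ b)))"
proof -
  interpret S: setting U g xi c0 d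
    by (unfold_locales) (use assms in auto)
  show ?thesis
  proof (intro conjI ballI allI impI)
    fix x assume x: "x \<in> U"
    show "dotd xi (mu g xi) x / mu g xi x = 2 * div_vec g xi x / real d" using S.point1[OF x] by blast
  next
    fix x b assume x: "x \<in> U"
    show "accel g xi x b = (dotd xi (mu g xi) x / mu g xi x) * xi x $ b - (1/2) * grad_up g (mu g xi) x b"
      using S.point1[OF x] by blast
  next
    fix x assume x: "x \<in> U"
    show "S0 c0 d g xi x = (\<chi> a. - 4 * mu g xi x * deriv (deriv (chi0 c0 d)) (mu g xi x) * xi x $ a)"
      by (rule S.point2[OF x])
  next
    fix x assume x: "x \<in> U"
    show "div_vec g (S0 c0 d g xi) x = 0" by (rule S.point3[OF x])
  next
    fix t s :: "real^'n \<Rightarrow> real" and x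
    assume h: "\<forall>x\<in>U. \<forall>a b. symcov g xi x a b = t x * g x $ a $ b + s x * lower g xi x $ a * lower g xi x $ b"
      and x: "x \<in> U"
    have r: "s x = 0 \<and> t x = div_vec g xi x / real d"
      by (rule S.point4[OF x]) (use h x in auto)
    show "s x = 0" using r by blast
    show "t x = div_vec g xi x / real d" using r by blast
    fix a b
    show "symcov g xi x a b = (div_vec g xi x / real d) * g x $ a $ b"
      using h x r by simp
  qed
qed


end
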